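(* Let $(\pi_1,\pi_2)$ be a chainable pair of patterns, $\pi_i=(a_i,b_i,c_i,d_i)$, and let $\mathcal{P}=\mathcal{P}(\mathbf{S}_{\pi_1},\mathbf{S}_{\pi_2})$. Then for each $P\in\mathcal{P}$: (1) $R_P=\operatorname{supp}(\mathbf{S}_{\pi_1}[:,i])$ and $C_P=\operatorname{supp}(\mathbf{S}_{\pi_2}[i,:])$ for every $i\in P$; (2) the sets $R_P\times C_P$, $P\in\mathcal{P}$, are pairwise disjoint; (3) $|P|=r(\pi_1,\pi_2)$, $|R_P|=b_1$ and $|C_P|=c_2$; (4) $\operatorname{supp}(\mathbf{S}_{\pi_1*\pi_2})=\operatorname{supp}(\mathbf{S}_{\pi_1}\mathbf{S}_{\pi_2})=\bigcup_{P\in\mathcal{P}}R_P\times C_P$.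
   Context: A pattern is a tuple $\pi=(a,b,c,d)$ of positive integers and $\mathbf{S}_\pi:=\mathbf{I}_a\otimes\mathbf{1}_{b\times c}\otimes\mathbf{I}_d\in\{0,1\}^{abd\times acd}$. Patterns $\pi_1,\pi_2$ are chainable if $a_1c_1/a_2=b_2d_2/d_1=:r(\pi_1,\pi_2)$ is an integer, $a_1\mid a_2$ and $d_2\mid d_1$; then $\pi_1*\pi_2:=(a_1,b_1d_1/d_2,a_2c_2/a_1,d_2)$. For binary matrices $\mathbf{L}\in\{0,1\}^{m\times r},\mathbf{R}\in\{0,1\}^{r\times n}$, let $\mathbf{U}_i:=\mathbf{L}[:,i]\mathbf{R}[i,:]\in\{0,1\}^{m\times n}$; the relation $i\sim j\iff\mathbf{U}_i=\mathbf{U}_j$ partitions $\{1,\dots,r\}$ into classes, the set of which is $\mathcal{P}(\mathbf{L},\mathbf{R})$; for a class $P$, $R_P\subseteq\{1,\dots,m\}$ and $C_P\subseteq\{1,\dots,n\}$ are such that the common support of $\mathbf{U}_i$, $i\in P$, equals $R_P\times C_P$. $\operatorname{supp}$ denotes the set of indices of nonzero entries. *)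

theory Defs
  imports "Jordan_Normal_Form.Matrix"
begin

type_synonym pattern = "nat \<times> nat \<times> nat \<times> nat"

definition is_pattern :: "pattern \<Rightarrow> bool" where
  "is_pattern \<pi> = (case \<pi> of (a, b, c, d) \<Rightarrow> 0 < a \<and> 0 < b \<and> 0 < c \<and> 0 < d)"

definition kron :: "nat mat \<Rightarrow> nat mat \<Rightarrow> nat mat" where
  "kron A B = mat (dim_row A * dim_row B) (dim_col A * dim_col B)
     (\<lambda>(i, j). A $$ (i div dim_row B, j div dim_col B) * B $$ (i mod dim_row B, j mod dim_col B))"

definition ones_mat :: "nat \<Rightarrow> nat \<Rightarrow> nat mat" where
  "ones_mat m n = mat m n (\<lambda>_. 1)"

definition S_pat :: "pattern \<Rightarrow> nat mat" where
  "S_pat \<pi> = (case \<pi> of (a, b, c, d) \<Rightarrow> kron (kron (1\<^sub>m a) (ones_mat b c)) (1\<^sub>m d))"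

definition chainable :: "pattern \<Rightarrow> pattern \<Rightarrow> bool" where
  "chainable \<pi>1 \<pi>2 = (case \<pi>1 of (a1, b1, c1, d1) \<Rightarrow> case \<pi>2 of (a2, b2, c2, d2) \<Rightarrow>
     a2 dvd a1 * c1 \<and> d1 dvd b2 * d2 \<and> a1 * c1 div a2 = b2 * d2 div d1 \<and> a1 dvd a2 \<and> d2 dvd d1)"

definition r_ratio :: "pattern \<Rightarrow> pattern \<Rightarrow> nat" where
  "r_ratio \<pi>1 \<pi>2 = (case \<pi>1 of (a1, b1, c1, d1) \<Rightarrow> case \<pi>2 of (a2, b2, c2, d2) \<Rightarrow> a1 * c1 div a2)"

definition pat_comp :: "pattern \<Rightarrow> pattern \<Rightarrow> pattern" where
  "pat_comp \<pi>1 \<pi>2 = (case \<pi>1 of (a1, b1, c1, d1) \<Rightarrow> case \<pi>2 of (a2, b2, c2, d2) \<Rightarrow>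
     (a1, b1 * d1 div d2, a2 * c2 div a1, d2))"

definition mat_supp :: "nat mat \<Rightarrow> (nat \<times> nat) set" where
  "mat_supp A = {(i, j). i < dim_row A \<and> j < dim_col A \<and> A $$ (i, j) \<noteq> 0}"

definition col_supp :: "nat mat \<Rightarrow> nat \<Rightarrow> nat set" where
  "col_supp A k = {i. i < dim_row A \<and> A $$ (i, k) \<noteq> 0}"

definition row_supp :: "nat mat \<Rightarrow> nat \<Rightarrow> nat set" where
  "row_supp A k = {j. j < dim_col A \<and> A $$ (k, j) \<noteq> 0}"

definition U_mat :: "nat mat \<Rightarrow> nat mat \<Rightarrow> nat \<Rightarrow> nat mat" where
  "U_mat L R i = mat (dim_row L) (dim_col R) (\<lambda>(p, q). L $$ (p, i) * R $$ (i, q))"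

definition U_classes :: "nat mat \<Rightarrow> nat mat \<Rightarrow> nat set set" where
  "U_classes L R = (\<lambda>i. {j. j < dim_col L \<and> U_mat L R j = U_mat L R i}) ` {..<dim_col L}"

definition R_cls :: "nat mat \<Rightarrow> nat mat \<Rightarrow> nat set \<Rightarrow> nat set" where
  "R_cls L R P = fst ` mat_supp (U_mat L R (SOME i. i \<in> P))"

definition C_cls :: "nat mat \<Rightarrow> nat mat \<Rightarrow> nat set \<Rightarrow> nat set" where
  "C_cls L R P = snd ` mat_supp (U_mat L R (SOME i. i \<in> P))"

end

theory Submission
  imports Defs
begin
lemma S_pat_dims: "dim_row (S_pat (a,b,c,d)) = a*b*d" "dim_col (S_pat (a,b,c,d)) = a*c*d"
  by (simp_all add: S_pat_def kron_def ones_mat_def)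

lemma kron_index:
  "i < dim_row A * dim_row B \<Longrightarrow> j < dim_col A * dim_col B \<Longrightarrow>
   kron A B $$ (i,j) = A $$ (i div dim_row B, j div dim_col B) * B $$ (i mod dim_row B, j mod dim_col B)"
  unfolding kron_def by simp

lemma kron_dims: "dim_row (kron A B) = dim_row A * dim_row B" "dim_col (kron A B) = dim_col A * dim_col B"
  unfolding kron_def by simp_all

lemma S_pat_entry:
  assumes "i < a*b*d" "j < a*c*d"
  shows "S_pat (a,b,c,d) $$ (i,j) = (if i div (b*d) = j div (c*d) \<and> i mod d = j mod d then 1 else 0)"
proof -
  have d: "d > 0" using assms by (cases d) auto
  have i1: "i div d < a*b" using assms(1) by (simp add: div_less_iff_less_mult d)
  have j1: "j div d < a*c" using assms(2) by (simp add: div_less_iff_less_mult d)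
  have b: "b > 0" using i1 by (cases b) auto
  have c: "c > 0" using j1 by (cases c) auto
  have i2: "i div d div b < a" using i1 b by (simp add: div_less_iff_less_mult)
  have j2: "j div d div c < a" using j1 c by (simp add: div_less_iff_less_mult)
  have e1: "i div (b*d) = i div d div b" "j div (c*d) = j div d div c"
    by (metis div_mult2_eq mult.commute)+
  have k1: "S_pat (a,b,c,d) $$ (i,j) = kron (1\<^sub>m a) (ones_mat b c) $$ (i div d, j div d) * 1\<^sub>m d $$ (i mod d, j mod d)"
    unfolding S_pat_def using assms by (simp add: kron_index kron_dims ones_mat_def)
  have k2: "kron (1\<^sub>m a) (ones_mat b c) $$ (i div d, j div d) = 1\<^sub>m a $$ (i div d div b, j div d div c)"
    using i1 j1 b c by (simp add: kron_index ones_mat_def)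
  have k3: "1\<^sub>m a $$ (i div d div b, j div d div c) = (if i div d div b = j div d div c then 1 else 0)"
    using i2 j2 by simp
  have k4: "(1\<^sub>m d :: nat mat) $$ (i mod d, j mod d) = (if i mod d = j mod d then 1 else 0)"
    using d by simp
  show ?thesis unfolding k1 k2 k3 k4 e1 by simp
qed

lemma card_block:
  assumes "\<alpha> < A" "s < D"
  shows "card {p. p < A*B*D \<and> p div (B*D) = \<alpha> \<and> p mod D = s} = B"
proof -
  let ?f = "\<lambda>u. \<alpha>*(B*D) + u*D + s"
  have eq: "{p. p < A*B*D \<and> p div (B*D) = \<alpha> \<and> p mod D = s} = ?f ` {..<B}"
  proof (intro equalityI subsetI)
    fix p assume "p \<in> {p. p < A*B*D \<and> p div (B*D) = \<alpha> \<and> p mod D = s}"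
    hence p: "p < A*B*D" "p div (B*D) = \<alpha>" "p mod D = s" by auto
    define u where "u = p mod (B*D) div D"
    have "p mod (B*D) mod D = s" using p(3) by (simp add: mod_mod_cancel)
    hence "p mod (B*D) = u*D + s" unfolding u_def by (metis div_mult_mod_eq)
    hence pm: "p mod (B*D) = u*D + s" .
    have "\<alpha>*(B*D) + (u*D+s) = p div (B*D) * (B*D) + p mod (B*D)" using p(2) pm by (simp add: mult.commute)
    also have "\<dots> = p" by (rule div_mult_mod_eq)
    finally have "p = ?f u" by (simp add: add.assoc)
    moreover have "u < B"
    proof -
      have B: "B > 0" using p(1) by (cases B) auto
      have D: "D > 0" using assms(2) by simp
      have "p mod (B*D) < B*D" using B D by simp
      thus ?thesis unfolding u_def using D by (simp add: div_less_iff_less_mult)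
    qed
    ultimately show "p \<in> ?f ` {..<B}" by auto
  next
    fix p assume "p \<in> ?f ` {..<B}"
    then obtain u where u: "u < B" "p = ?f u" by auto
    have lt: "u*D + s < B*D"
    proof -
      have "u*D + s < u*D + D" using assms(2) by simp
      also have "\<dots> = (u+1)*D" by simp
      also have "\<dots> \<le> B*D" using u(1) by (intro mult_right_mono) auto
      finally show ?thesis .
    qed
    have q: "B*D \<noteq> 0" using lt by (metis less_zeroE mult_is_0)
    have "(u*D+s + \<alpha>*(B*D)) div (B*D) = \<alpha> + (u*D+s) div (B*D)" using q by (rule div_mult_self1)
    hence "p div (B*D) = \<alpha>" using lt u(2) by (simp add: ac_simps)
    moreover have "p mod D = s"
    proof -
      have "p = s + (\<alpha>*B+u)*D" using u(2) by (simp add: algebra_simps)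
      thus ?thesis using assms(2) by simp
    qed
    moreover have "p < A*B*D"
    proof -
      have "p < \<alpha>*(B*D) + B*D" using lt u(2) by simp
      also have "\<dots> = (\<alpha>+1)*(B*D)" by simp
      also have "\<dots> \<le> A*(B*D)" using assms(1) by (intro mult_right_mono) auto
      finally show ?thesis by (simp add: mult.assoc)
    qed
    ultimately show "p \<in> {p. p < A*B*D \<and> p div (B*D) = \<alpha> \<and> p mod D = s}" by auto
  qed
  have "inj_on ?f {..<B}"
  proof (rule inj_onI)
    fix x y assume "x \<in> {..<B}" "y \<in> {..<B}" "?f x = ?f y"
    hence "x*D = y*D" by simp
    thus "x = y" using assms(2) by simp
  qed
  thus ?thesis using eq by (simp add: card_image)
qed

theorem lemma4p6:
  fixes a1 b1 c1 d1 a2 b2 c2 d2 :: nat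
  assumes "is_pattern (a1, b1, c1, d1)" and "is_pattern (a2, b2, c2, d2)"
    and "chainable (a1, b1, c1, d1) (a2, b2, c2, d2)"
  defines "L \<equiv> S_pat (a1, b1, c1, d1)" and "R \<equiv> S_pat (a2, b2, c2, d2)"
  shows "(\<forall>P \<in> U_classes L R. \<forall>i \<in> P.
            mat_supp (U_mat L R i) = R_cls L R P \<times> C_cls L R P \<and>
            R_cls L R P = col_supp L i \<and> C_cls L R P = row_supp R i) \<and>
    (\<forall>P \<in> U_classes L R. \<forall>Q \<in> U_classes L R. P \<noteq> Q \<longrightarrow>
            (R_cls L R P \<times> C_cls L R P) \<inter> (R_cls L R Q \<times> C_cls L R Q) = {}) \<and>
    (\<forall>P \<in> U_classes L R. card P = r_ratio (a1, b1, c1, d1) (a2, b2, c2, d2) \<and>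
            card (R_cls L R P) = b1 \<and> card (C_cls L R P) = c2) \<and>
    mat_supp (S_pat (pat_comp (a1, b1, c1, d1) (a2, b2, c2, d2))) = mat_supp (L * R) \<and>
    mat_supp (L * R) = (\<Union>P \<in> U_classes L R. R_cls L R P \<times> C_cls L R P)"
proof -
  have pos: "0 < a1" "0 < b1" "0 < c1" "0 < d1" "0 < a2" "0 < b2" "0 < c2" "0 < d2"
    using assms(1,2) by (auto simp: is_pattern_def)
  have ch: "a2 dvd a1 * c1" "d1 dvd b2 * d2" "a1 * c1 div a2 = b2 * d2 div d1" "a1 dvd a2" "d2 dvd d1"
    using assms(3) by (auto simp: chainable_def)
  define r where "r = a1 * c1 div a2"
  have ac: "a1 * c1 = a2 * r" using ch(1) unfolding r_def by simp
  have bd: "b2 * d2 = d1 * r" using ch(2,3) unfolding r_def by simp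
  obtain e where e: "a2 = a1 * e" using ch(4) by (auto simp: dvd_def)
  obtain f where f: "d1 = d2 * f" using ch(5) by (auto simp: dvd_def)
  have rpos: "r > 0" using ac pos by (cases r) auto
  have epos: "e > 0" using e pos by (cases e) auto
  define N where "N = a1 * c1 * d1"
  define m where "m = a1 * b1 * d1"
  define n where "n = a2 * c2 * d2"
  have N2: "a2 * b2 * d2 = N" unfolding N_def using ac bd
    by (metis mult.assoc mult.commute)
  have cd: "c1 * d1 = e * (b2 * d2)"
  proof -
    have "a1 * (c1 * d1) = a1 * (e * (b2 * d2))" using N2 e unfolding N_def apply (simp add: ac_simps) by metis
    thus ?thesis using pos by simp
  qed
  have N3: "N = a2 * r * d1" using ac unfolding N_def by simp
  have dims: "dim_row L = m" "dim_col L = N" "dim_row R = N" "dim_col R = n"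
    unfolding L_def R_def m_def N_def n_def using N2 unfolding N_def by (simp_all add: S_pat_dims)
  define inL where "inL = (\<lambda>p k. p div (b1*d1) = k div (c1*d1) \<and> p mod d1 = k mod d1)"
  define inR where "inR = (\<lambda>k q. q div (c2*d2) = k div (b2*d2) \<and> q mod d2 = k mod d2)"
  have Lent: "L $$ (p,k) = (if inL p k then 1 else 0)" if "p < m" "k < N" for p k
    using that unfolding L_def inL_def m_def N_def by (simp add: S_pat_entry)
  have Rent: "R $$ (k,q) = (if inR k q then 1 else 0)" if "k < N" "q < n" for k q
    using that N2 unfolding R_def inR_def n_def by (auto simp add: S_pat_entry)
  have colS: "col_supp L k = {p. p < m \<and> inL p k}" if "k < N" for k
    using that dims Lent unfolding col_supp_def by (auto split: if_splits)
  have rowS: "row_supp R k = {q. q < n \<and> inR k q}" if "k < N" for k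
    using that dims Rent unfolding row_supp_def by (auto split: if_splits)
  have cardC: "card (col_supp L k) = b1" if "k < N" for k
  proof -
    have "k div (c1*d1) < a1" using that pos unfolding N_def by (simp add: div_less_iff_less_mult ac_simps)
    moreover have "k mod d1 < d1" using pos by simp
    moreover have "col_supp L k = {p. p < a1*b1*d1 \<and> p div (b1*d1) = k div (c1*d1) \<and> p mod d1 = k mod d1}"
      using colS[OF that] unfolding inL_def m_def by simp
    ultimately show ?thesis by (simp add: card_block)
  qed
  have cardR: "card (row_supp R k) = c2" if "k < N" for k
  proof -
    have "k div (b2*d2) < a2" using that pos N2 by (simp add: div_less_iff_less_mult ac_simps)
    moreover have "k mod d2 < d2" using pos by simp
    moreover have "row_supp R k = {q. q < a2*c2*d2 \<and> q div (c2*d2) = k div (b2*d2) \<and> q mod d2 = k mod d2}"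
      using rowS[OF that] unfolding inR_def n_def by simp
    ultimately show ?thesis by (simp add: card_block)
  qed
  have neC: "col_supp L k \<noteq> {}" if "k < N" for k
    using cardC[OF that] pos by (metis card.empty less_irrefl)
  have neR: "row_supp R k \<noteq> {}" if "k < N" for k
    using cardR[OF that] pos by (metis card.empty less_irrefl)
  have Ument: "U_mat L R k = mat m n (\<lambda>(p,q). if inL p k \<and> inR k q then 1 else 0)" if "k < N" for k
    by (rule eq_matI) (use that dims Lent Rent in \<open>auto simp: U_mat_def\<close>)
  have Usupp: "mat_supp (U_mat L R k) = col_supp L k \<times> row_supp R k" if "k < N" for k
    using that unfolding Ument[OF that] mat_supp_def colS[OF that] rowS[OF that] by (auto split: if_splits)
  have colEq: "col_supp L j = col_supp L k \<longleftrightarrow> (j div (c1*d1) = k div (c1*d1) \<and> j mod d1 = k mod d1)"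
    if jk: "j < N" "k < N" for j k
  proof
    assume "col_supp L j = col_supp L k"
    moreover obtain p where "p \<in> col_supp L k" using neC[OF jk(2)] by auto
    ultimately have "inL p j" "inL p k" using colS jk by auto
    thus "j div (c1*d1) = k div (c1*d1) \<and> j mod d1 = k mod d1" unfolding inL_def by simp
  next
    assume "j div (c1*d1) = k div (c1*d1) \<and> j mod d1 = k mod d1"
    hence "inL p j = inL p k" for p unfolding inL_def by simp
    thus "col_supp L j = col_supp L k" using colS jk by simp
  qed
  have rowEq: "row_supp R j = row_supp R k \<longleftrightarrow> (j div (b2*d2) = k div (b2*d2) \<and> j mod d2 = k mod d2)"
    if jk: "j < N" "k < N" for j k
  proof
    assume "row_supp R j = row_supp R k"
    moreover obtain q where "q \<in> row_supp R k" using neR[OF jk(2)] by auto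
    ultimately have "inR j q" "inR k q" using rowS jk by auto
    thus "j div (b2*d2) = k div (b2*d2) \<and> j mod d2 = k mod d2" unfolding inR_def by simp
  next
    assume "j div (b2*d2) = k div (b2*d2) \<and> j mod d2 = k mod d2"
    hence "inR j q = inR k q" for q unfolding inR_def by simp
    thus "row_supp R j = row_supp R k" using rowS jk by simp
  qed
  have Ueq: "U_mat L R j = U_mat L R k \<longleftrightarrow> (col_supp L j = col_supp L k \<and> row_supp R j = row_supp R k)"
    if jk: "j < N" "k < N" for j k
  proof
    assume "U_mat L R j = U_mat L R k"
    hence E: "col_supp L j \<times> row_supp R j = col_supp L k \<times> row_supp R k" using Usupp jk by metis
    show "col_supp L j = col_supp L k \<and> row_supp R j = row_supp R k"
      using E neC[OF jk(1)] neR[OF jk(1)] neC[OF jk(2)] neR[OF jk(2)] by (auto simp: times_eq_iff)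
  next
    assume "col_supp L j = col_supp L k \<and> row_supp R j = row_supp R k"
    hence "inL p j = inL p k" "inR j q = inR k q" for p q
      using colEq rowEq jk unfolding inL_def inR_def by auto
    thus "U_mat L R j = U_mat L R k" unfolding Ument[OF jk(1)] Ument[OF jk(2)] by simp
  qed
  define Cls where "Cls = (\<lambda>k. {j. j < N \<and> U_mat L R j = U_mat L R k})"
  have UC: "U_classes L R = Cls ` {..<N}" unfolding U_classes_def Cls_def dims by simp
  have clsf: "R_cls L R (Cls k) = col_supp L i \<and> C_cls L R (Cls k) = row_supp R i"
    if "k < N" "i \<in> Cls k" for k i
  proof -
    have "k \<in> Cls k" using that unfolding Cls_def by simp
    hence i0: "(SOME i. i \<in> Cls k) \<in> Cls k" by (rule someI)
    define i0 where "i0 = (SOME i. i \<in> Cls k)"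
    have i0N: "i0 < N" and i0U: "U_mat L R i0 = U_mat L R i"
      using i0 that unfolding i0_def Cls_def by auto
    have iN: "i < N" using that unfolding Cls_def by auto
    have "R_cls L R (Cls k) = col_supp L i0" "C_cls L R (Cls k) = row_supp R i0"
      unfolding R_cls_def C_cls_def i0_def[symmetric] Usupp[OF i0N] using neC[OF i0N] neR[OF i0N] by simp_all
    moreover have "col_supp L i0 = col_supp L i \<and> row_supp R i0 = row_supp R i"
      using Ueq[OF i0N iN] i0U by simp
    ultimately show ?thesis by simp
  qed
  have part1: "\<forall>P \<in> U_classes L R. \<forall>i \<in> P.
            mat_supp (U_mat L R i) = R_cls L R P \<times> C_cls L R P \<and>
            R_cls L R P = col_supp L i \<and> C_cls L R P = row_supp R i"
  proof (intro ballI)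
    fix P i assume "P \<in> U_classes L R" "i \<in> P"
    then obtain k where k: "k < N" "P = Cls k" unfolding UC by auto
    have iN: "i < N" using \<open>i \<in> P\<close> k unfolding Cls_def by auto
    show "mat_supp (U_mat L R i) = R_cls L R P \<times> C_cls L R P \<and>
            R_cls L R P = col_supp L i \<and> C_cls L R P = row_supp R i"
      using clsf[OF k(1)] \<open>i \<in> P\<close> k(2) Usupp[OF iN] by simp
  qed
  have self: "k \<in> Cls k" if "k < N" for k using that unfolding Cls_def by simp
  have part2: "\<forall>P \<in> U_classes L R. \<forall>Q \<in> U_classes L R. P \<noteq> Q \<longrightarrow>
            (R_cls L R P \<times> C_cls L R P) \<inter> (R_cls L R Q \<times> C_cls L R Q) = {}"
  proof (intro ballI impI)
    fix P Q assume "P \<in> U_classes L R" "Q \<in> U_classes L R" "P \<noteq> Q"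
    then obtain k j where kj: "k < N" "P = Cls k" "j < N" "Q = Cls j" unfolding UC by auto
    have RP: "R_cls L R P = col_supp L k" "C_cls L R P = row_supp R k"
      using clsf[OF kj(1) self[OF kj(1)]] kj(2) by simp_all
    have RQ: "R_cls L R Q = col_supp L j" "C_cls L R Q = row_supp R j"
      using clsf[OF kj(3) self[OF kj(3)]] kj(4) by simp_all
    show "(R_cls L R P \<times> C_cls L R P) \<inter> (R_cls L R Q \<times> C_cls L R Q) = {}"
    proof (rule ccontr)
      assume "(R_cls L R P \<times> C_cls L R P) \<inter> (R_cls L R Q \<times> C_cls L R Q) \<noteq> {}"
      then obtain p q where "p \<in> col_supp L k" "p \<in> col_supp L j" "q \<in> row_supp R k" "q \<in> row_supp R j"
        unfolding RP RQ by auto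
      hence "inL p k" "inL p j" "inR k q" "inR j q" using colS rowS kj by auto
      hence "j div (c1*d1) = k div (c1*d1) \<and> j mod d1 = k mod d1"
        "j div (b2*d2) = k div (b2*d2) \<and> j mod d2 = k mod d2" unfolding inL_def inR_def by auto
      hence "U_mat L R j = U_mat L R k" using Ueq colEq rowEq kj by simp
      hence "Cls j = Cls k" unfolding Cls_def by simp
      thus False using kj \<open>P \<noteq> Q\<close> by simp
    qed
  qed
  have part3: "\<forall>P \<in> U_classes L R. card P = r_ratio (a1, b1, c1, d1) (a2, b2, c2, d2) \<and>
            card (R_cls L R P) = b1 \<and> card (C_cls L R P) = c2"
  proof
    fix P assume "P \<in> U_classes L R"
    then obtain k where k: "k < N" "P = Cls k" unfolding UC by auto
    have RP: "R_cls L R P = col_supp L k" "C_cls L R P = row_supp R k"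
      using clsf[OF k(1) self[OF k(1)]] k(2) by simp_all
    have dv: "j div (c1*d1) = j div (b2*d2) div e" for j
      unfolding cd by (metis div_mult2_eq mult.commute)
    have md: "j mod d2 = j mod d1 mod d2" for j
      unfolding f by (simp add: mod_mod_cancel)
    have "Cls k = {j. j < a2*r*d1 \<and> j div (r*d1) = k div (r*d1) \<and> j mod d1 = k mod d1}"
    proof -
      have mem: "j \<in> Cls k \<longleftrightarrow> j < N \<and> j div (b2*d2) = k div (b2*d2) \<and> j mod d1 = k mod d1" for j
      proof (cases "j < N")
        case True
        show ?thesis
          using Ueq[OF True k(1)] colEq[OF True k(1)] rowEq[OF True k(1)] dv[of j] dv[of k] md[of j] md[of k] True
          unfolding Cls_def by auto
      next
        case False thus ?thesis unfolding Cls_def by simp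
      qed
      have "Cls k = {j. j < N \<and> j div (b2*d2) = k div (b2*d2) \<and> j mod d1 = k mod d1}"
        using mem by blast
      thus ?thesis using N3 bd by (simp add: mult.commute)
    qed
    moreover have "k div (r*d1) < a2" using k(1) N3 rpos pos by (simp add: div_less_iff_less_mult ac_simps)
    moreover have "k mod d1 < d1" using pos by simp
    ultimately have "card P = r" using k(2) by (simp add: card_block)
    thus "card P = r_ratio (a1, b1, c1, d1) (a2, b2, c2, d2) \<and>
            card (R_cls L R P) = b1 \<and> card (C_cls L R P) = c2"
      unfolding RP using cardC[OF k(1)] cardR[OF k(1)] by (simp add: r_ratio_def r_def)
  qed
  have prodS: "mat_supp (L * R) = {(p,q). p < m \<and> q < n \<and> (\<exists>k<N. inL p k \<and> inR k q)}"
  proof -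
    have ent: "(L * R) $$ (p,q) = (\<Sum>k \<in> {0..<N}. (if inL p k \<and> inR k q then 1 else 0))" if "p < m" "q < n" for p q
    proof -
      have "(L * R) $$ (p,q) = (\<Sum>k \<in> {0..<N}. L $$ (p,k) * R $$ (k,q))"
        using that dims by (simp add: scalar_prod_def)
      also have "\<dots> = (\<Sum>k \<in> {0..<N}. (if inL p k \<and> inR k q then 1 else 0))"
        by (rule sum.cong) (auto simp: Lent Rent that)
      finally show ?thesis .
    qed
    have nz: "(L*R)$$(p,q) \<noteq> 0 \<longleftrightarrow> (\<exists>k<N. inL p k \<and> inR k q)" if "p < m" "q < n" for p q
      unfolding ent[OF that] by (auto simp: sum_eq_0_iff)
    show ?thesis unfolding mat_supp_def index_mult_mat(2,3) dims using nz by auto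
  qed
  have part4b: "mat_supp (L * R) = (\<Union>P \<in> U_classes L R. R_cls L R P \<times> C_cls L R P)"
  proof -
    have RC: "R_cls L R (Cls k) = col_supp L k" "C_cls L R (Cls k) = row_supp R k" if "k < N" for k
      using clsf[OF that self[OF that]] by simp_all
    have "(\<Union>P \<in> U_classes L R. R_cls L R P \<times> C_cls L R P) = (\<Union>k<N. col_supp L k \<times> row_supp R k)"
      unfolding UC using RC by auto
    also have "\<dots> = {(p,q). p < m \<and> q < n \<and> (\<exists>k<N. inL p k \<and> inR k q)}"
      using colS rowS by auto
    finally show ?thesis using prodS by simp
  qed
  have key: "(\<exists>k<N. inL p k \<and> inR k q) \<longleftrightarrow> (p div (b1*d1) = q div (e*(c2*d2)) \<and> p mod d2 = q mod d2)"
    if "p < m" "q < n" for p q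
  proof
    have dv: "j div (c1*d1) = j div (b2*d2) div e" for j
      unfolding cd by (metis div_mult2_eq mult.commute)
    have md: "j mod d2 = j mod d1 mod d2" for j
      unfolding f by (simp add: mod_mod_cancel)
    have dq: "q div (e*(c2*d2)) = q div (c2*d2) div e"
      by (metis div_mult2_eq mult.commute)
    {
      assume "\<exists>k<N. inL p k \<and> inR k q"
      then obtain k where "k < N" "inL p k" "inR k q" by auto
      hence h: "p div (b1*d1) = k div (c1*d1)" "p mod d1 = k mod d1" "q div (c2*d2) = k div (b2*d2)" "q mod d2 = k mod d2"
        unfolding inL_def inR_def by auto
      have "p div (b1*d1) = q div (e*(c2*d2))" unfolding dq h(1) h(3) dv[of k] ..
      moreover have "p mod d2 = q mod d2" unfolding md[of p] h(2) h(4) md[of k] ..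
      ultimately show "p div (b1*d1) = q div (e*(c2*d2)) \<and> p mod d2 = q mod d2" ..
    }
    assume A: "p div (b1*d1) = q div (e*(c2*d2)) \<and> p mod d2 = q mod d2"
    define \<alpha> where "\<alpha> = q div (c2*d2)"
    define k where "k = \<alpha> * (b2*d2) + p mod d1"
    have pd: "p mod d1 < b2*d2"
    proof -
      have "d1 \<le> d1*r" using rpos by simp
      moreover have "p mod d1 < d1" using pos by simp
      ultimately show ?thesis unfolding bd by linarith
    qed
    have al: "\<alpha> < a2" using that(2) pos unfolding \<alpha>_def n_def by (simp add: div_less_iff_less_mult mult.assoc)
    have kd: "k div (b2*d2) = \<alpha>"
    proof -
      have q0: "b2*d2 \<noteq> 0" using pos by simp
      have "(p mod d1 + \<alpha>*(b2*d2)) div (b2*d2) = \<alpha> + (p mod d1) div (b2*d2)" using q0 by (rule div_mult_self1)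
      thus ?thesis using pd unfolding k_def by (simp add: add.commute)
    qed
    have kN: "k < N"
    proof -
      have "k < \<alpha> * (b2*d2) + b2*d2" using pd unfolding k_def by simp
      also have "\<dots> = (\<alpha>+1) * (b2*d2)" by simp
      also have "\<dots> \<le> a2 * (b2*d2)" using al by (intro mult_right_mono) auto
      finally show ?thesis using N2 by (simp add: mult.assoc)
    qed
    have km1: "k mod d1 = p mod d1"
    proof -
      have "k = p mod d1 + (\<alpha>*r)*d1" unfolding k_def bd by (simp add: ac_simps)
      thus ?thesis by simp
    qed
    have "p div (b1*d1) = k div (c1*d1)" unfolding dv[of k] kd \<alpha>_def using A dq by simp
    hence "inL p k" unfolding inL_def using km1 by simp
    moreover have "q mod d2 = k mod d2" unfolding md[of k] km1 md[of p, symmetric] using A by simp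
    hence "inR k q" unfolding inR_def using kd unfolding \<alpha>_def by simp
    ultimately show "\<exists>k<N. inL p k \<and> inR k q" using kN by auto
  qed
  have part4a: "mat_supp (S_pat (pat_comp (a1, b1, c1, d1) (a2, b2, c2, d2))) = mat_supp (L * R)"
  proof -
    have B': "b1 * d1 div d2 = b1 * f" using f pos by simp
    have C': "a2 * c2 div a1 = e * c2" using e pos by simp
    have dm: "a1 * (b1*f) * d2 = m" "a1 * (e*c2) * d2 = n" unfolding m_def n_def f e by (simp_all add: ac_simps)
    have SC: "S_pat (pat_comp (a1, b1, c1, d1) (a2, b2, c2, d2)) = S_pat (a1, b1*f, e*c2, d2)"
      unfolding pat_comp_def by (simp add: B' C')
    have ent: "S_pat (a1, b1*f, e*c2, d2) $$ (p,q) = (if p div (b1*d1) = q div (e*(c2*d2)) \<and> p mod d2 = q mod d2 then 1 else 0)"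
      if "p < m" "q < n" for p q
    proof -
      have "S_pat (a1, b1*f, e*c2, d2) $$ (p,q) = (if p div (b1*f*d2) = q div (e*c2*d2) \<and> p mod d2 = q mod d2 then 1 else 0)"
        using that dm by (intro S_pat_entry) auto
      moreover have "b1*f*d2 = b1*d1" "e*c2*d2 = e*(c2*d2)" unfolding f by (simp_all add: ac_simps)
      ultimately show ?thesis by simp
    qed
    have "mat_supp (S_pat (pat_comp (a1, b1, c1, d1) (a2, b2, c2, d2))) =
       {(p,q). p < m \<and> q < n \<and> p div (b1*d1) = q div (e*(c2*d2)) \<and> p mod d2 = q mod d2}"
      unfolding SC mat_supp_def S_pat_dims dm using ent by (auto split: if_splits)
    note M1 = this
    have M2: "mat_supp (L * R) =
       {(p,q). p < m \<and> q < n \<and> p div (b1*d1) = q div (e*(c2*d2)) \<and> p mod d2 = q mod d2}"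
    proof (rule Set.set_eqI)
      fix x :: "nat \<times> nat"
      obtain p q where x: "x = (p,q)" by (cases x)
      have "x \<in> mat_supp (L * R) \<longleftrightarrow> p < m \<and> q < n \<and> (\<exists>k<N. inL p k \<and> inR k q)"
        unfolding prodS x by simp
      moreover have "x \<in> {(p,q). p < m \<and> q < n \<and> p div (b1*d1) = q div (e*(c2*d2)) \<and> p mod d2 = q mod d2}
         \<longleftrightarrow> p < m \<and> q < n \<and> p div (b1*d1) = q div (e*(c2*d2)) \<and> p mod d2 = q mod d2"
        unfolding x by simp
      ultimately show "x \<in> mat_supp (L * R) \<longleftrightarrow> x \<in> {(p,q). p < m \<and> q < n \<and> p div (b1*d1) = q div (e*(c2*d2)) \<and> p mod d2 = q mod d2}"
        using key[of p q] by blast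
    qed
    show ?thesis using M1 M2 by simp
  qed
  show ?thesis using part1 part2 part3 part4a part4b by blast
qed

end
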